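(* Let $p\in(0,1)$ and let $B$ be a $\lfloor 1/p\rfloor$-matching (a set of edges of a graph in which every vertex is incident to at most $\lfloor 1/p\rfloor$ edges). Let $B_p$ be the random subset of $B$ obtained by keeping each edge independently with probability $p$. Then $$\mathbb{E}[\mu(B_p)]\ \ge\ \frac{|B|}{\lfloor 1/p\rfloor}\cdot\frac{1-3p}{3}.$$
   Context: $\mu(X)$ denotes the maximum matching size of the graph formed by the edge set $X$. *)

theory Defs
  imports "HOL-Probability.Probability"
begin

definition is_edge_set :: "'a set set \<Rightarrow> bool" where
  "is_edge_set X \<longleftrightarrow> (\<forall>e\<in>X. card e = 2)"

definition is_b_matching :: "nat \<Rightarrow> 'a set set \<Rightarrow> bool" where
  "is_b_matching b X \<longleftrightarrow> (\<forall>v. card {e\<in>X. v \<in> e} \<le> b)"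

definition is_matching :: "'a set set \<Rightarrow> bool" where
  "is_matching M \<longleftrightarrow> (\<forall>e\<in>M. \<forall>f\<in>M. e \<noteq> f \<longrightarrow> e \<inter> f = {})"

text \<open>Maximum matching size of the graph formed by the edge set X (X finite).\<close>
definition mu :: "'a set set \<Rightarrow> nat" where
  "mu X = Max {card M | M. M \<subseteq> X \<and> is_matching M}"

definition random_subset :: "'b set \<Rightarrow> real \<Rightarrow> 'b set pmf" where
  "random_subset B p = map_pmf (\<lambda>f. {e\<in>B. f e}) (Pi_pmf B False (\<lambda>_. bernoulli_pmf p))"

end

theory Submission imports Defs begin

definition nb :: "'a set set \<Rightarrow> 'a set \<Rightarrow> 'a set set" where
  "nb S e = {f\<in>S. f \<noteq> e \<and> f \<inter> e \<noteq> {}}"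

lemma mu_set_finite: "finite S \<Longrightarrow> finite {card M | M. M \<subseteq> S \<and> is_matching M}"
  by (rule finite_subset[of _ "card ` Pow S"]) auto

lemma mu_ge_card: "finite S \<Longrightarrow> M \<subseteq> S \<Longrightarrow> is_matching M \<Longrightarrow> card M \<le> mu S"
  unfolding mu_def by (rule Max_ge[OF mu_set_finite]) auto

lemma mu_attained: assumes "finite S" shows "\<exists>M. M \<subseteq> S \<and> is_matching M \<and> card M = mu S"
proof -
  have "mu S \<in> {card M | M. M \<subseteq> S \<and> is_matching M}"
    unfolding mu_def by (rule Max_in[OF mu_set_finite[OF assms]]) (auto simp: is_matching_def)
  thus ?thesis by auto
qed

lemma caro_wei: "finite S \<Longrightarrow> (\<Sum>e\<in>S. 1 / (1 + real (card (nb S e)))) \<le> real (mu S)"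
proof (induction "card S" arbitrary: S rule: less_induct)
  case less
  show ?case
  proof (cases "S = {}")
    case True thus ?thesis by simp
  next
    case False
    define m where "m = Min ((\<lambda>e. card (nb S e)) ` S)"
    have "m \<in> (\<lambda>e. card (nb S e)) ` S" unfolding m_def using False less.prems by (intro Min_in) auto
    then obtain e where eS: "e \<in> S" and em: "card (nb S e) = m" by auto
    have emin: "card (nb S e) \<le> card (nb S f)" if "f \<in> S" for f
      unfolding em m_def using that less.prems by (intro Min_le) auto
    define S' where "S' = S - insert e (nb S e)"
    have fS': "finite S'" using less.prems by (simp add: S'_def)
    have "card S' < card S" unfolding S'_def using eS
      by (intro psubset_card_mono[OF less.prems]) auto
    hence IH: "(\<Sum>f\<in>S'. 1 / (1 + real (card (nb S' f)))) \<le> real (mu S')"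
      using less.hyps[OF \<open>card S' < card S\<close> fS'] by simp
    have mono1: "(\<Sum>f\<in>S'. 1 / (1 + real (card (nb S f)))) \<le> (\<Sum>f\<in>S'. 1 / (1 + real (card (nb S' f))))"
    proof (rule sum_mono)
      fix f assume "f \<in> S'"
      have "nb S' f \<subseteq> nb S f" unfolding nb_def S'_def by auto
      moreover have "finite (nb S f)" using less.prems unfolding nb_def by auto
      ultimately have "card (nb S' f) \<le> card (nb S f)" by (rule card_mono[rotated])
      thus "1 / (1 + real (card (nb S f))) \<le> 1 / (1 + real (card (nb S' f)))"
        by (intro divide_left_mono) auto
    qed
    have fin_nb: "finite (nb S e)" using less.prems unfolding nb_def by auto
    have enb: "e \<notin> nb S e" unfolding nb_def by auto
    have "(\<Sum>f\<in>insert e (nb S e). 1 / (1 + real (card (nb S f))))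
          \<le> (\<Sum>f\<in>insert e (nb S e). 1 / (1 + real (card (nb S e))))"
    proof (rule sum_mono)
      fix f assume "f \<in> insert e (nb S e)"
      hence "f \<in> S" using eS unfolding nb_def by auto
      thus "1 / (1 + real (card (nb S f))) \<le> 1 / (1 + real (card (nb S e)))"
        using emin by (intro divide_left_mono) auto
    qed
    also have "\<dots> = 1" using fin_nb enb by (simp add: field_simps)
    finally have ins: "(\<Sum>f\<in>insert e (nb S e). 1 / (1 + real (card (nb S f)))) \<le> 1" .
    have sub: "insert e (nb S e) \<subseteq> S" using eS unfolding nb_def by auto
    have split: "(\<Sum>f\<in>S. 1 / (1 + real (card (nb S f)))) =
       (\<Sum>f\<in>S'. 1 / (1 + real (card (nb S f)))) + (\<Sum>f\<in>insert e (nb S e). 1 / (1 + real (card (nb S f))))"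
      unfolding S'_def by (rule sum.subset_diff[OF sub less.prems])
    obtain M where M: "M \<subseteq> S'" "is_matching M" "card M = mu S'" using mu_attained[OF fS'] by blast
    have "insert e M \<subseteq> S" using M eS unfolding S'_def by auto
    moreover have "is_matching (insert e M)"
    proof -
      have "f \<inter> e = {}" if "f \<in> M" for f
        using that M(1) unfolding S'_def nb_def by auto
      thus ?thesis using M(2) unfolding is_matching_def by blast
    qed
    ultimately have "card (insert e M) \<le> mu S" using less.prems by (intro mu_ge_card)
    moreover have "card (insert e M) = card M + 1"
    proof -
      have "e \<notin> M" using M(1) unfolding S'_def by auto
      thus ?thesis using finite_subset[OF M(1) fS'] by simp
    qed
    ultimately have "real (mu S') + 1 \<le> real (mu S)" using M(3) by linarith
    thus ?thesis using split ins IH mono1 by linarith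
  qed
qed


lemma tangent:
  fixes x c :: real assumes "0 \<le> x" "0 \<le> c"
  shows "(1 + 2*c) / (1+c)^2 - x / (1+c)^2 \<le> 1 / (1 + x)"
proof -
  have "(1 + 2*c - x) * (1 + x) \<le> (1+c)^2"
  proof -
    have "(1+c)^2 - (1 + 2*c - x) * (1 + x) = (x - c)^2" by (simp add: algebra_simps power2_eq_square)
    moreover have "0 \<le> (x - c)^2" by simp
    ultimately show ?thesis by linarith
  qed
  hence "(1 + 2*c - x) / (1+c)^2 \<le> 1 / (1 + x)" using assms
    by (simp add: divide_simps)
  thus ?thesis by (simp add: diff_divide_distrib)
qed

lemma deg_bound:
  assumes "finite B" "e \<in> B" "card e = 2" "is_b_matching k B"
  shows "card (nb B e) \<le> 2 * (k - 1)"
proof -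
  obtain u v where e: "e = {u, v}" "u \<noteq> v" using assms(3) by (meson card_2_iff)
  have "nb B e \<subseteq> ({f\<in>B. u \<in> f} - {e}) \<union> ({f\<in>B. v \<in> f} - {e})"
    unfolding nb_def e by auto
  hence "card (nb B e) \<le> card (({f\<in>B. u \<in> f} - {e}) \<union> ({f\<in>B. v \<in> f} - {e}))"
    using assms(1) by (intro card_mono) auto
  also have "\<dots> \<le> card ({f\<in>B. u \<in> f} - {e}) + card ({f\<in>B. v \<in> f} - {e})"
    by (rule card_Un_le)
  also have "card ({f\<in>B. u \<in> f} - {e}) = card {f\<in>B. u \<in> f} - 1"
    using assms(1,2) e by (intro card_Diff_singleton) auto
  also have "card ({f\<in>B. v \<in> f} - {e}) = card {f\<in>B. v \<in> f} - 1"
    using assms(1,2) e by (intro card_Diff_singleton) auto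
  finally show ?thesis using assms(4) unfolding is_b_matching_def
    by (metis (no_types, lifting) add_le_mono diff_le_mono mult_2 order_trans)
qed

lemma setQ_finite:
  assumes "finite B"
  shows "finite (set_pmf (Pi_pmf B False (\<lambda>_. bernoulli_pmf p)))"
proof (rule finite_subset)
  show "set_pmf (Pi_pmf B False (\<lambda>_. bernoulli_pmf p)) \<subseteq> (\<lambda>S x. x \<in> S) ` Pow B"
  proof
    fix g assume "g \<in> set_pmf (Pi_pmf B False (\<lambda>_. bernoulli_pmf p))"
    hence "\<forall>x. x \<notin> B \<longrightarrow> g x = False" using set_Pi_pmf_subset[OF assms, of False "\<lambda>_. bernoulli_pmf p"] by blast
    hence "g = (\<lambda>x. x \<in> {x\<in>B. g x})" by auto
    thus "g \<in> (\<lambda>S x. x \<in> S) ` Pow B" by blast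
  qed
  show "finite ((\<lambda>S x. x \<in> S) ` Pow B)" using assms by simp
qed

lemma exp_ind:
  assumes "finite B" "T \<subseteq> B" "0 \<le> p" "p \<le> 1"
  shows "measure_pmf.expectation (Pi_pmf B False (\<lambda>_. bernoulli_pmf p))
           (\<lambda>g. \<Prod>x\<in>T. (of_bool (g x) :: real)) = p ^ card T"
proof -
  have fT: "finite T" using assms finite_subset by blast
  have eq: "(\<Prod>x\<in>T. (of_bool (g x) :: real)) = (\<Prod>x\<in>B. if x \<in> T then of_bool (g x) else 1)" for g
    using prod.inter_restrict[OF assms(1), of "\<lambda>x. (of_bool (g x) :: real)" T] assms(2)
    by (simp add: Int_absorb1)
  have "measure_pmf.expectation (Pi_pmf B False (\<lambda>_. bernoulli_pmf p))
           (\<lambda>g. \<Prod>x\<in>T. (of_bool (g x) :: real))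
        = measure_pmf.expectation (Pi_pmf B False (\<lambda>_. bernoulli_pmf p))
           (\<lambda>g. \<Prod>x\<in>B. (\<lambda>x v. if x \<in> T then of_bool v else 1) x (g x))"
    by (simp add: eq)
  also have "\<dots> = (\<Prod>x\<in>B. measure_pmf.expectation (bernoulli_pmf p) (\<lambda>v. (if x \<in> T then of_bool v else 1) :: real))"
    by (rule expectation_prod_Pi_pmf[OF assms(1)])
       (auto intro!: integrable_measure_pmf_finite)
  also have "\<dots> = (\<Prod>x\<in>B. if x \<in> T then p else 1)"
    using assms by (intro prod.cong) auto
  also have "\<dots> = (\<Prod>x\<in>T. p)"
    using prod.inter_restrict[OF assms(1), of "\<lambda>x. p" T] assms(2) by (simp add: Int_absorb1)
  also have "\<dots> = p ^ card T" by simp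
  finally show ?thesis .
qed


lemma pointwise:
  fixes c :: real and g :: "'a set \<Rightarrow> bool"
  assumes "finite B" "0 \<le> c"
  shows "(\<Sum>e\<in>B. (1 + 2*c) / (1+c)^2 * of_bool (g e)
            - 1 / (1+c)^2 * (\<Sum>f\<in>nb B e. of_bool (g e) * of_bool (g f)))
         \<le> real (mu {e\<in>B. g e})"
proof -
  define S where "S = {e\<in>B. g e}"
  have fS: "finite S" using assms by (simp add: S_def)
  have nbS: "nb S e = {f\<in>nb B e. g f}" for e unfolding nb_def S_def by auto
  have cardnb: "real (card (nb S e)) = (\<Sum>f\<in>nb B e. of_bool (g f))" for e
  proof -
    have "finite (nb B e)" using assms unfolding nb_def by auto
    thus ?thesis unfolding nbS by (simp add: sum.inter_filter[symmetric] of_bool_def)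
  qed
  have "(\<Sum>e\<in>B. (1 + 2*c) / (1+c)^2 * of_bool (g e)
            - 1 / (1+c)^2 * (\<Sum>f\<in>nb B e. of_bool (g e) * of_bool (g f)))
      = (\<Sum>e\<in>B. if g e then (1 + 2*c) / (1+c)^2 - real (card (nb S e)) / (1+c)^2 else 0)"
    by (intro sum.cong) (auto simp: cardnb)
  also have "\<dots> = (\<Sum>e\<in>S. (1 + 2*c) / (1+c)^2 - real (card (nb S e)) / (1+c)^2)"
    unfolding S_def using assms(1) by (simp add: sum.inter_filter)
  also have "\<dots> \<le> (\<Sum>e\<in>S. 1 / (1 + real (card (nb S e))))"
    by (intro sum_mono tangent) (auto simp: assms)
  also have "\<dots> \<le> real (mu S)" by (rule caro_wei[OF fS])
  finally show ?thesis unfolding S_def .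
qed
lemma aux_div: "(x::real) \<noteq> 0 \<Longrightarrow> x / (x*x) = 1/x" by simp

lemma key_ineq: fixes p c k :: real assumes "0<p" "1 \<le> k" "0 \<le> c" "(1 - 3*p) * (1 + c) \<le> 3 * k * p"
  shows "(1 - 3 * p) / 3 / k \<le> p / (1 + c)"
proof -
  have "(1 - 3 * p) / 3 / k = (1 - 3*p) / (3*k)" by simp
  also have "\<dots> \<le> p / (1 + c)"
  proof -
    have "(1 - 3*p) / (3*k) = (1 - 3*p) * (1+c) / ((3*k)*(1+c))" using assms by simp
    also have "\<dots> \<le> (3*k*p) / ((3*k)*(1+c))" using assms by (intro divide_right_mono) auto
    also have "\<dots> = p / (1+c)" using assms by simp
    finally show ?thesis .
  qed
  finally show ?thesis .
qed

theorem mainTheorem5: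
  fixes p :: real and B :: "'a set set"
  assumes "0 < p" "p < 1"
    and "finite B" "is_edge_set B"
    and "is_b_matching (nat \<lfloor>1 / p\<rfloor>) B"
  shows "measure_pmf.expectation (random_subset B p) (\<lambda>S. real (mu S))
           \<ge> real (card B) / real (nat \<lfloor>1 / p\<rfloor>) * ((1 - 3 * p) / 3)"
proof -
  define k where "k = nat \<lfloor>1 / p\<rfloor>"
  have "1 < 1 / p" using assms by (simp add: field_simps)
  hence k1: "1 \<le> k" unfolding k_def by linarith
  have "real k \<le> 1 / p" unfolding k_def using \<open>1 < 1/p\<close> by linarith
  hence kp: "real k * p \<le> 1" using assms by (simp add: field_simps)
  have "1 / p < real k + 1" unfolding k_def using \<open>1 < 1/p\<close> by linarith
  hence kp2: "1 < (real k + 1) * p" using assms by (simp add: field_simps)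
  define c where "c = 2 * (real k - 1) * p"
  have c0: "0 \<le> c" using k1 assms unfolding c_def by simp
  define \<alpha> where "\<alpha> = (1 + 2*c) / (1+c)^2"
  define \<beta> where "\<beta> = 1 / (1+c)^2"
  define Q where "Q = Pi_pmf B False (\<lambda>_. bernoulli_pmf p)"
  have intQ: "integrable (measure_pmf Q) h" for h :: "_ \<Rightarrow> real"
    unfolding Q_def by (rule integrable_measure_pmf_finite[OF setQ_finite[OF assms(3)]])
  define G where "G = (\<lambda>g::'a set \<Rightarrow> bool. \<Sum>e\<in>B. \<alpha> * of_bool (g e)
            - \<beta> * (\<Sum>f\<in>nb B e. of_bool (g e) * (of_bool (g f) :: real)))"
  have "measure_pmf.expectation (random_subset B p) (\<lambda>S. real (mu S))
        = measure_pmf.expectation Q (\<lambda>g. real (mu {e\<in>B. g e}))"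
    unfolding random_subset_def Q_def by simp
  also have "\<dots> \<ge> measure_pmf.expectation Q G"
    unfolding G_def \<alpha>_def \<beta>_def
    by (intro integral_mono intQ pointwise assms(3) c0)
  finally have E1: "measure_pmf.expectation Q G \<le> measure_pmf.expectation (random_subset B p) (\<lambda>S. real (mu S))" .
  have e1: "measure_pmf.expectation Q (\<lambda>g. of_bool (g e) :: real) = p" if "e \<in> B" for e
    using exp_ind[OF assms(3), of "{e}" p] that assms unfolding Q_def by simp
  have e2: "measure_pmf.expectation Q (\<lambda>g. of_bool (g e) * of_bool (g f) :: real) = p^2"
    if "e \<in> B" "f \<in> nb B e" for e f
  proof -
    have "f \<in> B" "f \<noteq> e" using that unfolding nb_def by auto
    thus ?thesis using exp_ind[OF assms(3), of "{e,f}" p] that assms unfolding Q_def by (simp add: power2_eq_square)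
  qed
  have "measure_pmf.expectation Q G = (\<Sum>e\<in>B. \<alpha> * p - \<beta> * (\<Sum>f\<in>nb B e. p^2))"
    unfolding G_def
    by (simp add: intQ e1 e2 Bochner_Integration.integral_sum Bochner_Integration.integral_diff
        cong: sum.cong)
  also have "\<dots> \<ge> (\<Sum>e\<in>B. \<alpha> * p - \<beta> * (c * p))"
  proof (rule sum_mono)
    fix e assume eB: "e \<in> B"
    have "card (nb B e) \<le> 2 * (k - 1)"
      using deg_bound[OF assms(3) eB _ assms(5)[folded k_def]] assms(4) eB unfolding is_edge_set_def by blast
    hence "real (card (nb B e)) \<le> real (2 * (k - 1))" by (simp only: of_nat_le_iff)
    hence "real (card (nb B e)) \<le> 2 * (real k - 1)" using k1 by (simp add: of_nat_diff)
    hence "real (card (nb B e)) * p^2 \<le> c * p" unfolding c_def using assms(1)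
      by (simp add: power2_eq_square)
    moreover have "\<beta> \<ge> 0" unfolding \<beta>_def by simp
    ultimately show "\<alpha> * p - \<beta> * (c * p) \<le> \<alpha> * p - \<beta> * (\<Sum>f\<in>nb B e. p^2)"
      by (simp add: mult_left_mono)
  qed
  finally have E2: "(\<Sum>e\<in>B. \<alpha> * p - \<beta> * (c * p)) \<le> measure_pmf.expectation Q G" .
  have "\<alpha> * p - \<beta> * (c * p) = p / (1 + c)"
  proof -
    have nz: "1 + c \<noteq> 0" using c0 by simp
    have "\<alpha> - \<beta> * c = (1 + 2*c) / (1+c)^2 - c / (1+c)^2"
      unfolding \<alpha>_def \<beta>_def by simp
    also have "\<dots> = (1 + 2*c - c) / (1+c)^2" by (rule diff_divide_distrib[symmetric])
    also have "\<dots> = (1+c) / ((1+c)*(1+c))" by (simp add: power2_eq_square algebra_simps)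
    also have "\<dots> = 1/(1+c)" by (rule aux_div[OF nz])
    finally have "\<alpha> - \<beta> * c = 1 / (1 + c)" .
    hence "\<alpha> * p - \<beta> * (c * p) = (1 / (1 + c)) * p" by (simp add: algebra_simps)
    thus ?thesis by simp
  qed
  hence E3: "(\<Sum>e\<in>B. \<alpha> * p - \<beta> * (c * p)) = real (card B) * (p / (1 + c))" by simp
  have key: "(1 - 3 * p) / 3 / real k \<le> p / (1 + c)"
  proof -
    have "(1 - 3*p) * (1 + c) \<le> 3 * real k * p"
    proof -
      have "0 \<le> 3 * p * c" using c0 assms by simp
      hence "(1 - 3*p) * (1 + c) \<le> 1 + c - 3 * p" by (simp add: algebra_simps)
      also have "\<dots> \<le> 3 * real k * p" unfolding c_def using kp2 assms(1) by (simp add: algebra_simps)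
      finally show ?thesis .
    qed
    thus ?thesis using k1 c0 assms(1) by (intro key_ineq) auto
  qed
  have "real (card B) / real k * ((1 - 3 * p) / 3) = real (card B) * ((1 - 3 * p) / 3 / real k)"
    by simp
  also have "\<dots> \<le> real (card B) * (p / (1 + c))" by (intro mult_left_mono key) simp
  also have "\<dots> \<le> measure_pmf.expectation (random_subset B p) (\<lambda>S. real (mu S))"
    using E2 E1 unfolding E3 by (rule order_trans)
  finally show ?thesis unfolding k_def .
qed

end
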